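(* Let $p$ be an odd prime and let $n,s$ be positive integers such that $2n/s\geq 3$ is an odd integer; put $q=p^n$, $d=p^s$. For any $k=\alpha^d+\alpha\in\mathbb{F}_{q^2}$ (with $\alpha\in\mathbb{F}_{q^2}$), the map \[ \phi_k\big((a^d+a,x)\big)=\big(a^d+a+k,\ x+a^d\alpha+a\alpha^d+\alpha^{d+1}\big) \] is an automorphism of the graph $\mathcal{A}_{q^2,d}$.
   Context: The map $x\mapsto x^d+x$ is a bijection of $\mathbb{F}_{q^2}$. The graph $\mathcal{A}_{q^2,d}$ has vertex set $\mathbb{F}_{q^2}\times\mathbb{F}_{q^2}$; writing vertices as $(a^d+a,x)$ and $(b^d+b,y)$ with $a,b,x,y\in\mathbb{F}_{q^2}$ (uniquely), two distinct vertices are adjacent iff $a^db+ab^d=x+y$. *)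

theory Defs
  imports "HOL-Computational_Algebra.Primes"
begin

definition trace_map :: "nat \<Rightarrow> 'a::field \<Rightarrow> 'a" where
  "trace_map d a = a ^ d + a"

definition A_adj :: "nat \<Rightarrow> 'a::field \<times> 'a \<Rightarrow> 'a \<times> 'a \<Rightarrow> bool" where
  "A_adj d v w \<longleftrightarrow> v \<noteq> w \<and>
     (let a = inv (trace_map d) (fst v); b = inv (trace_map d) (fst w)
      in a ^ d * b + a * b ^ d = snd v + snd w)"

definition graph_automorphism :: "('v \<Rightarrow> 'v \<Rightarrow> bool) \<Rightarrow> ('v \<Rightarrow> 'v) \<Rightarrow> bool" where
  "graph_automorphism adj f \<longleftrightarrow> bij f \<and> (\<forall>v w. adj v w \<longleftrightarrow> adj (f v) (f w))"

definition phi_map :: "nat \<Rightarrow> 'a::field \<Rightarrow> 'a \<times> 'a \<Rightarrow> 'a \<times> 'a" where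
  "phi_map d \<alpha> v =
     (let a = inv (trace_map d) (fst v)
      in (fst v + trace_map d \<alpha>, snd v + a ^ d * \<alpha> + a * \<alpha> ^ d + \<alpha> ^ (d + 1)))"

end

theory Submission
  imports Defs "HOL-Number_Theory.Residues"
begin

lemma pow_card_same:
  fixes x :: "'a::{field,finite}"
  shows "x ^ card (UNIV :: 'a set) = x"
proof (cases "x = 0")
  case False
  have "x * (\<Prod>y\<in>UNIV-{0}. x * y) = x * x ^ (card (UNIV :: 'a set) - 1) * \<Prod>(UNIV-{0})"
    by (simp add: prod.distrib mult_ac)
  also have "x * x ^ (card (UNIV :: 'a set) - 1) = x ^ Suc (card (UNIV :: 'a set) - 1)"
    by (subst power_Suc) auto
  also have "Suc (card (UNIV :: 'a set) - 1) = card (UNIV :: 'a set)"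
    using finite_UNIV_card_ge_0[where ?'a = 'a] by simp
  also have "(\<Prod>y\<in>UNIV-{0}. x * y) = (\<Prod>y\<in>UNIV-{0}. y)"
    by (rule prod.reindex_bij_witness[of _ "\<lambda>y. y / x" "\<lambda>y. x * y"]) (use False in auto)
  finally show ?thesis
    by simp
qed (use finite_UNIV_card_ge_0[where ?'a = 'a] in auto)

lemma char_is_p:
  assumes "prime p" "card (UNIV :: 'a::{field,finite} set) = (p ^ n) ^ 2"
  shows "CHAR('a) = p"
proof -
  have pos: "CHAR('a) > 0" by (simp add: finite_imp_CHAR_pos)
  have pr: "prime CHAR('a)" using pos prime_CHAR_semidom by blast
  have "CHAR('a) dvd p ^ (n * 2)" using CHAR_dvd_CARD[where 'a='a] assms(2)
    by (simp add: power_mult)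
  then have "CHAR('a) dvd p" using pr prime_dvd_power by blast
  then show ?thesis using pr assms(1) primes_dvd_imp_eq by blast
qed

theorem lemma8:
  fixes p n s :: nat and \<alpha> :: "'a::{field,finite}"
  assumes "prime p" and "odd p" and "n > 0" and "s > 0"
    and "s dvd 2 * n" and "odd (2 * n div s)" and "2 * n div s \<ge> 3"
    and "card (UNIV :: 'a set) = (p ^ n) ^ 2"
  shows "graph_automorphism (A_adj (p ^ s)) (phi_map (p ^ s) \<alpha>)"
proof -
  define d where "d = p ^ s"
  define T :: "'a \<Rightarrow> 'a" where "T = trace_map d"
  have ch: "CHAR('a) = p" using char_is_p assms(1,8) by blast
  have prc: "prime CHAR('a)" using ch assms(1) by simp
  have dream: "(x + y) ^ d = x ^ d + y ^ d" for x y :: 'a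
    using freshmans_dream'[OF prc, of d s] ch d_def by simp
  have dodd: "odd d" using assms(2) d_def by simp
  have Tadd: "T (x + y) = T x + T y" for x y
    unfolding T_def trace_map_def dream by (simp add: add_ac)
  have Tker: "c = 0" if "T c = 0" for c
  proof -
    have c1: "c ^ d = - c" using that unfolding T_def trace_map_def
      by (simp only: eq_neg_iff_add_eq_0)
    have it: "c ^ (d ^ k) = (-1) ^ k * c" for k
    proof (induction k)
      case (Suc k)
      have "c ^ (d ^ Suc k) = (c ^ d) ^ (d ^ k)"
        by (simp add: power_mult[symmetric] mult.commute)
      also have "\<dots> = (-c) ^ (d ^ k)" using c1 by simp
      also have "\<dots> = - (c ^ (d ^ k))" using dodd by (simp add: power_minus_odd)
      finally show ?case using Suc by simp
    qed simp
    define m where "m = 2 * n div s"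
    have "d ^ m = p ^ (s * m)" by (simp add: d_def power_mult)
    also have "s * m = 2 * n" using assms(5) m_def by simp
    finally have "d ^ m = card (UNIV :: 'a set)" using assms(8)
      by (simp add: power_mult[symmetric] mult.commute)
    then have "c = - c" using it[of m] pow_card_same[of c] assms(6) m_def by simp
    then have "of_nat 2 * c = 0" by (simp add: algebra_simps)
    moreover have "of_nat 2 \<noteq> (0::'a)"
    proof
      assume "of_nat 2 = (0::'a)"
      then have "p dvd 2" using of_nat_eq_0_iff_char_dvd ch by metis
      then have "p \<le> 2" by (simp add: dvd_imp_le)
      moreover have "p \<ge> 2" using assms(1) prime_ge_2_nat by blast
      ultimately have "p = 2" by simp
      then show False using assms(2) by simp
    qed
    ultimately show ?thesis by simp
  qed
  have Tinj: "inj T"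
  proof (rule injI)
    fix x y assume "T x = T y"
    then have "T (x - y) = 0" using Tadd[of "x - y" y] by simp
    then have "x - y = 0" by (rule Tker)
    then show "x = y" by simp
  qed
  have "surj T" using Tinj finite_UNIV_inj_surj[of T] by simp
  then have Tbij: "bij T" using Tinj by (simp add: bij_def)
  have invT: "inv_into UNIV T (T a) = a" for a using Tinj by simp
  have Tinv: "T (inv_into UNIV T x) = x" for x using Tbij by (simp add: bij_is_surj surj_f_inv_f)
  let ?f = "phi_map d \<alpha>"
  have fst_phi: "inv_into UNIV T (fst (?f v)) = inv_into UNIV T (fst v) + \<alpha>" for v
  proof -
    have "fst (?f v) = T (inv_into UNIV T (fst v)) + T \<alpha>" unfolding phi_map_def T_def[symmetric]
      by (simp add: Let_def Tinv)
    also have "\<dots> = T (inv_into UNIV T (fst v) + \<alpha>)" using Tadd by simp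
    finally show ?thesis using invT by simp
  qed
  have injf: "inj ?f"
  proof (rule injI)
    fix v w assume e: "?f v = ?f w"
    then have "fst v = fst w" unfolding phi_map_def by (simp add: Let_def)
    moreover then have "snd v = snd w" using e unfolding phi_map_def by (simp add: Let_def)
    ultimately show "v = w" by (simp add: prod_eq_iff)
  qed
  have adj: "A_adj d v w \<longleftrightarrow> A_adj d (?f v) (?f w)" for v w
  proof -
    define a where "a = inv_into UNIV T (fst v)"
    define b where "b = inv_into UNIV T (fst w)"
    have sv: "snd (?f v) = snd v + a ^ d * \<alpha> + a * \<alpha> ^ d + \<alpha> ^ (d + 1)"
      unfolding phi_map_def a_def T_def by (simp add: Let_def)
    have sw: "snd (?f w) = snd w + b ^ d * \<alpha> + b * \<alpha> ^ d + \<alpha> ^ (d + 1)"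
      unfolding phi_map_def b_def T_def by (simp add: Let_def)
    have ne: "v \<noteq> w \<longleftrightarrow> ?f v \<noteq> ?f w" using injf by (auto dest: injD)
    have key: "(a + \<alpha>) ^ d * (b + \<alpha>) + (a + \<alpha>) * (b + \<alpha>) ^ d =
      snd (?f v) + snd (?f w) \<longleftrightarrow> a ^ d * b + a * b ^ d = snd v + snd w"
    proof -
      define Z where "Z = a^d*\<alpha> + \<alpha>^d*b + a*\<alpha>^d + \<alpha>*b^d + \<alpha>^(d+1) + \<alpha>^(d+1)"
      have e1: "(a + \<alpha>) ^ d * (b + \<alpha>) + (a + \<alpha>) * (b + \<alpha>) ^ d = (a^d*b + a*b^d) + Z"
        unfolding dream Z_def by (simp add: algebra_simps)
      have e2: "snd (?f v) + snd (?f w) = (snd v + snd w) + Z"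
        unfolding sv sw Z_def by (simp add: algebra_simps)
      show ?thesis unfolding e1 e2 by simp
    qed
    show ?thesis unfolding A_adj_def T_def[symmetric] Let_def fst_phi
      using ne key a_def b_def by auto
  qed
  have "surj ?f" using injf finite_UNIV_inj_surj[of ?f] by simp
  then have "bij ?f" using injf by (simp add: bij_def)
  then show ?thesis unfolding graph_automorphism_def d_def[symmetric] using adj by blast
qed

end
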